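(* Consider the problem, algorithm and notation described in the context, with each $f_i$ $u$-strongly convex ($u>0$) and $l$-smooth, and DCGS run with parameters $\alpha_k=\frac{k}{k+1}$, $\theta_k=k+1$, $\eta_k=\frac{ku}{2}$, $\tau_k=\frac{4\|L\|^2}{(k+1)u}$, $e_i^k=\frac{\max(u\|\mathbf{x}^0-\mathbf{x}^*\|^2,\|L\|^2\|\mathbf{y}^0\|^2/u)}{mNk}$. Then to obtain an output with $F(\overline{\mathbf{x}}_N)-F(\mathbf{x}^* )\le\epsilon$, the number of communication rounds and the number of LO calls performed by each agent are respectively bounded by $$\mathcal{O}\left(\sqrt{\frac{\max\left(u\|\mathbf{x}^0-\mathbf{x}^*\|^2,\frac{\|L\|^2\|\mathbf{y}^0\|^2}{u}\right)}{\epsilon}}\right)\quad\text{and}\quad\mathcal{O}\left(\frac{ml\max\left(u\|\mathbf{x}^0-\mathbf{x}^*\|^2,\frac{\|L\|^2\|\mathbf{y}^0\|^2}{u}\right)}{\epsilon^2}\right).$$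
   Context: Let $G=(V,E)$ be a connected undirected graph with $V=\{1,\dots,m\}$ and $N(i)=\{j:(i,j)\in E\}$. Its Laplacian $L\in\mathbb{R}^{m\times m}$ has $L_{ii}=|N(i)|$, $L_{ij}=-1$ if $i\ne j$ and $(i,j)\in E$, and $L_{ij}=0$ otherwise; $\|L\|$ is its spectral norm. Agent $i$ holds $f_i:\mathbb{R}^d\to\mathbb{R}$ satisfying $\frac{u}{2}\|y-x\|^2\le f_i(y)-f_i(x)-\nabla f_i(x)^T(y-x)\le\frac{l}{2}\|y-x\|^2$. $X\subset\mathbb{R}^d$ is a nonempty compact convex set accessed through a linear oracle (LO) returning $\arg\min_{s\in X}\langle g,s\rangle$. For $\mathbf{x}=(x_1,\dots,x_m)\in X^m$ let $F(\mathbf{x})=\sum_{i=1}^m f_i(x_i)$, and let $\mathbf{x}^*$ be an optimal solution of $\min_{\mathbf{x}\in X^m}F(\mathbf{x})$ subject to $(L\otimes I_d)\mathbf{x}=0$. All norms on $\mathbb{R}^{md}$ are Euclidean. Procedure $CG(f,x,w,\eta,e)$ (Frank–Wolfe on $\phi(z)=\langle w,z\rangle+f(z)+\frac{\eta}{2}\|z-x\|^2$ over $X$): pick $z^0\in X$; for $t=0,1,\dots$: let $g^t=\nabla f(z^t)+w+\eta(z^t-x)$ and $s^t=\arg\min_{s\in X}\langle g^t,s\rangle$ (one LO call); if $\langle g^t,z^t-s^t\rangle\le e$ return $z^t$; otherwise $z^{t+1}=(1-\gamma_t)z^t+\gamma_t s^t$ with $\gamma_t=\frac{2}{t+2}$ or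 chosen by line search. Algorithm DCGS: given $N$, $\mathbf{x}^0=\mathbf{x}^{-1}\in X^m$, $\mathbf{y}^0\in\mathbb{R}^{md}$ and parameters $\{\alpha_k\},\{\tau_k\},\{\eta_k\},\{\theta_k\},\{e_i^k\}$. For $k=1,\dots,N$, every agent $i$ computes: $\tilde x_i^k=\alpha_k(x_i^{k-1}-x_i^{k-2})+x_i^{k-1}$ and broadcasts it to its neighbors; $v_i^k=\sum_{j\in N(i)\cup\{i\}}L_{ij}\tilde x_j^k$; $y_i^k=y_i^{k-1}+\frac{1}{\tau_k}v_i^k$ and broadcasts it to its neighbors; $w_i^k=\sum_{j\in N(i)\cup\{i\}}L_{ij}y_j^k$; $x_i^k=CG(f_i,x_i^{k-1},w_i^k,\eta_k,e_i^k)$. Thus each outer iteration uses two communication rounds. Output $\overline{\mathbf{x}}_N=(\sum_{k=1}^N\theta_k)^{-1}\sum_{k=1}^N\theta_k\mathbf{x}^k$. *)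

theory Defs
  imports "HOL-Analysis.Analysis"
begin

definition graph_ok :: "(nat \<Rightarrow> nat \<Rightarrow> bool) \<Rightarrow> nat \<Rightarrow> bool" where
  "graph_ok E m \<longleftrightarrow> m \<ge> 1
     \<and> (\<forall>i j. E i j \<longrightarrow> i \<in> {1..m} \<and> j \<in> {1..m})
     \<and> (\<forall>i j. E i j \<longrightarrow> E j i)
     \<and> (\<forall>i. \<not> E i i)
     \<and> (\<forall>i\<in>{1..m}. \<forall>j\<in>{1..m}. E\<^sup>*\<^sup>* i j)"

definition lap :: "(nat \<Rightarrow> nat \<Rightarrow> bool) \<Rightarrow> nat \<Rightarrow> nat \<Rightarrow> nat \<Rightarrow> real" where
  "lap E m i j = (if i = j then real (card {k\<in>{1..m}. E i k})
                  else if E i j then -1 else 0)"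

definition lap_norm :: "(nat \<Rightarrow> nat \<Rightarrow> bool) \<Rightarrow> nat \<Rightarrow> real" where
  "lap_norm E m = Sup {sqrt (\<Sum>i\<in>{1..m}. (\<Sum>j\<in>{1..m}. lap E m i j * v j)\<^sup>2) | v.
                        (\<Sum>j\<in>{1..m}. (v j)\<^sup>2) = 1}"

definition consensus :: "(nat \<Rightarrow> nat \<Rightarrow> bool) \<Rightarrow> nat \<Rightarrow> (nat \<Rightarrow> 'v::real_vector) \<Rightarrow> bool" where
  "consensus E m z \<longleftrightarrow> (\<forall>i\<in>{1..m}. (\<Sum>j\<in>{1..m}. lap E m i j *\<^sub>R z j) = 0)"

definition Fsum :: "nat \<Rightarrow> (nat \<Rightarrow> 'v \<Rightarrow> real) \<Rightarrow> (nat \<Rightarrow> 'v) \<Rightarrow> real" where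
  "Fsum m f z = (\<Sum>i\<in>{1..m}. f i (z i))"

definition sqdist :: "nat \<Rightarrow> (nat \<Rightarrow> 'v::real_normed_vector) \<Rightarrow> (nat \<Rightarrow> 'v) \<Rightarrow> real" where
  "sqdist m a b = (\<Sum>i\<in>{1..m}. (norm (a i - b i))\<^sup>2)"

definition sqnorm :: "nat \<Rightarrow> (nat \<Rightarrow> 'v::real_normed_vector) \<Rightarrow> real" where
  "sqnorm m a = (\<Sum>i\<in>{1..m}. (norm (a i))\<^sup>2)"

definition is_lo :: "'v::real_inner set \<Rightarrow> 'v \<Rightarrow> 'v \<Rightarrow> bool" where
  "is_lo X g s \<longleftrightarrow> s \<in> X \<and> (\<forall>s'\<in>X. inner g s \<le> inner g s')"

definition cg_phi :: "('v::real_inner \<Rightarrow> real) \<Rightarrow> 'v \<Rightarrow> 'v \<Rightarrow> real \<Rightarrow> 'v \<Rightarrow> real" where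
  "cg_phi f x w \<eta> z = inner w z + f z + \<eta> / 2 * (norm (z - x))\<^sup>2"

definition cg_grad :: "('v::real_inner \<Rightarrow> 'v) \<Rightarrow> 'v \<Rightarrow> 'v \<Rightarrow> real \<Rightarrow> 'v \<Rightarrow> 'v" where
  "cg_grad gf x w \<eta> z = gf z + w + \<eta> *\<^sub>R (z - x)"

text \<open>A partial run of CG(f,x,w,eta,e) that has performed T+1 LO calls
  (calls at t = 0..T), where the stopping test failed at every t < T.
  Step size: either 2/(t+2) or exact line search on [0,1].\<close>
definition cg_partial ::
  "'v::real_inner set \<Rightarrow> ('v \<Rightarrow> real) \<Rightarrow> ('v \<Rightarrow> 'v) \<Rightarrow> 'v \<Rightarrow> 'v \<Rightarrow> real \<Rightarrow> real
    \<Rightarrow> (nat \<Rightarrow> 'v) \<Rightarrow> (nat \<Rightarrow> 'v) \<Rightarrow> nat \<Rightarrow> bool" where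
  "cg_partial X f gf x w \<eta> e z s T \<longleftrightarrow>
     z 0 \<in> X
   \<and> (\<forall>t\<le>T. is_lo X (cg_grad gf x w \<eta> (z t)) (s t))
   \<and> (\<forall>t<T. inner (cg_grad gf x w \<eta> (z t)) (z t - s t) > e
        \<and> (z (Suc t) = (1 - 2 / (real t + 2)) *\<^sub>R z t + (2 / (real t + 2)) *\<^sub>R s t
           \<or> (\<exists>\<gamma>\<in>{0..1}. z (Suc t) = (1 - \<gamma>) *\<^sub>R z t + \<gamma> *\<^sub>R s t
                \<and> (\<forall>\<gamma>'\<in>{0..1}. cg_phi f x w \<eta> (z (Suc t))
                      \<le> cg_phi f x w \<eta> ((1 - \<gamma>') *\<^sub>R z t + \<gamma>' *\<^sub>R s t)))))"

definition cg_complete ::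
  "'v::real_inner set \<Rightarrow> ('v \<Rightarrow> real) \<Rightarrow> ('v \<Rightarrow> 'v) \<Rightarrow> 'v \<Rightarrow> 'v \<Rightarrow> real \<Rightarrow> real
    \<Rightarrow> (nat \<Rightarrow> 'v) \<Rightarrow> (nat \<Rightarrow> 'v) \<Rightarrow> nat \<Rightarrow> bool" where
  "cg_complete X f gf x w \<eta> e z s T \<longleftrightarrow>
     cg_partial X f gf x w \<eta> e z s T
   \<and> inner (cg_grad gf x w \<eta> (z T)) (z T - s T) \<le> e"

text \<open>x k i = x_i^k for k \<ge> 0; x^{-1} = x^0 is obtained as x (k-2) for k = 1
  (natural-number subtraction).\<close>
definition dcgs_xt :: "(nat \<Rightarrow> real) \<Rightarrow> (nat \<Rightarrow> nat \<Rightarrow> 'v::real_vector) \<Rightarrow> nat \<Rightarrow> nat \<Rightarrow> 'v" where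
  "dcgs_xt \<alpha> x k j = \<alpha> k *\<^sub>R (x (k - 1) j - x (k - 2) j) + x (k - 1) j"

definition dcgs_y ::
  "(nat \<Rightarrow> nat \<Rightarrow> bool) \<Rightarrow> nat \<Rightarrow> (nat \<Rightarrow> real) \<Rightarrow> (nat \<Rightarrow> real)
    \<Rightarrow> (nat \<Rightarrow> nat \<Rightarrow> 'v::real_vector) \<Rightarrow> (nat \<Rightarrow> nat \<Rightarrow> 'v) \<Rightarrow> nat \<Rightarrow> nat \<Rightarrow> 'v" where
  "dcgs_y E m \<alpha> \<tau> x y k i =
     y (k - 1) i + (1 / \<tau> k) *\<^sub>R (\<Sum>j\<in>{1..m}. lap E m i j *\<^sub>R dcgs_xt \<alpha> x k j)"

definition dcgs_w ::
  "(nat \<Rightarrow> nat \<Rightarrow> bool) \<Rightarrow> nat \<Rightarrow> (nat \<Rightarrow> 'v::real_vector) \<Rightarrow> nat \<Rightarrow> 'v" where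
  "dcgs_w E m yk i = (\<Sum>j\<in>{1..m}. lap E m i j *\<^sub>R yk j)"

text \<open>An execution of the first K outer iterations of DCGS; Z k i, S k i, T k i
  record the CG run of agent i at outer iteration k.\<close>
definition dcgs_exec ::
  "'v::real_inner set \<Rightarrow> (nat \<Rightarrow> nat \<Rightarrow> bool) \<Rightarrow> nat \<Rightarrow> (nat \<Rightarrow> 'v \<Rightarrow> real) \<Rightarrow> (nat \<Rightarrow> 'v \<Rightarrow> 'v)
    \<Rightarrow> (nat \<Rightarrow> real) \<Rightarrow> (nat \<Rightarrow> real) \<Rightarrow> (nat \<Rightarrow> real) \<Rightarrow> (nat \<Rightarrow> nat \<Rightarrow> real)
    \<Rightarrow> (nat \<Rightarrow> 'v) \<Rightarrow> (nat \<Rightarrow> 'v) \<Rightarrow> nat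
    \<Rightarrow> (nat \<Rightarrow> nat \<Rightarrow> 'v) \<Rightarrow> (nat \<Rightarrow> nat \<Rightarrow> 'v)
    \<Rightarrow> (nat \<Rightarrow> nat \<Rightarrow> nat \<Rightarrow> 'v) \<Rightarrow> (nat \<Rightarrow> nat \<Rightarrow> nat \<Rightarrow> 'v) \<Rightarrow> (nat \<Rightarrow> nat \<Rightarrow> nat) \<Rightarrow> bool" where
  "dcgs_exec X E m f gf \<alpha> \<tau> \<eta> e x0 y0 K x y Z S T \<longleftrightarrow>
     x 0 = x0 \<and> y 0 = y0
   \<and> (\<forall>k\<in>{1..K}. \<forall>i\<in>{1..m}.
        y k i = dcgs_y E m \<alpha> \<tau> x y k i
      \<and> cg_complete X (f i) (gf i) (x (k - 1) i) (dcgs_w E m (y k) i) (\<eta> k) (e k i)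
                    (Z k i) (S k i) (T k i)
      \<and> x k i = Z k i (T k i))"

definition dcgs_out :: "nat \<Rightarrow> (nat \<Rightarrow> real) \<Rightarrow> (nat \<Rightarrow> nat \<Rightarrow> 'v::real_vector) \<Rightarrow> nat \<Rightarrow> 'v" where
  "dcgs_out N \<theta> x i = (1 / (\<Sum>k\<in>{1..N}. \<theta> k)) *\<^sub>R (\<Sum>k\<in>{1..N}. \<theta> k *\<^sub>R x k i)"

definition Dconst :: "real \<Rightarrow> real \<Rightarrow> nat \<Rightarrow> (nat \<Rightarrow> 'v::real_normed_vector) \<Rightarrow> (nat \<Rightarrow> 'v)
    \<Rightarrow> (nat \<Rightarrow> 'v) \<Rightarrow> real" where
  "Dconst u Lnm m x0 xs y0 = max (u * sqdist m x0 xs) (Lnm\<^sup>2 * sqnorm m y0 / u)"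

definition par_alpha :: "nat \<Rightarrow> real" where "par_alpha k = real k / (real k + 1)"
definition par_theta :: "nat \<Rightarrow> real" where "par_theta k = real k + 1"
definition par_eta :: "real \<Rightarrow> nat \<Rightarrow> real" where "par_eta u k = real k * u / 2"
definition par_tau :: "real \<Rightarrow> real \<Rightarrow> nat \<Rightarrow> real" where
  "par_tau u Lnm k = 4 * Lnm\<^sup>2 / ((real k + 1) * u)"
definition par_e :: "real \<Rightarrow> nat \<Rightarrow> nat \<Rightarrow> nat \<Rightarrow> nat \<Rightarrow> real" where
  "par_e D m N k i = D / (real m * real N * real k)"

end

theory Submission
  imports Defs
begin

definition ipm :: "nat \<Rightarrow> (nat \<Rightarrow> 'v::real_inner) \<Rightarrow> (nat \<Rightarrow> 'v) \<Rightarrow> real" where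
  "ipm m a b = (\<Sum>i\<in>{1..m}. inner (a i) (b i))"

lemma lap_sym: "(\<forall>i j. E i j \<longrightarrow> E j i) \<Longrightarrow> lap E m i j = lap E m j i"
  unfolding lap_def by auto

lemma ipm_Lop_sym:
  assumes "\<forall>i j. E i j \<longrightarrow> E j i"
  shows "ipm m (dcgs_w E m a) b = ipm m a (dcgs_w E m b)"
proof -
  have "ipm m (dcgs_w E m a) b = (\<Sum>i\<in>{1..m}. \<Sum>j\<in>{1..m}. lap E m i j * inner (a j) (b i))"
    unfolding ipm_def dcgs_w_def by (simp add: inner_sum_left)
  also have "\<dots> = (\<Sum>j\<in>{1..m}. \<Sum>i\<in>{1..m}. lap E m i j * inner (a j) (b i))"
    by (rule sum.swap)
  also have "\<dots> = ipm m a (dcgs_w E m b)"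
    unfolding ipm_def dcgs_w_def using lap_sym[OF assms]
    by (simp add: inner_sum_right inner_commute)
  finally show ?thesis .
qed

lemma Lop_diff: "dcgs_w E m (\<lambda>j. a j - b j) i = dcgs_w E m a i - dcgs_w E m b i"
  unfolding dcgs_w_def by (simp add: scaleR_diff_right sum_subtractf)

lemma Lop_add: "dcgs_w E m (\<lambda>j. a j + b j) i = dcgs_w E m a i + dcgs_w E m b i"
  unfolding dcgs_w_def by (simp add: scaleR_add_right sum.distrib)

lemma Lop_scale: "dcgs_w E m (\<lambda>j. c *\<^sub>R a j) i = c *\<^sub>R dcgs_w E m a i"
  unfolding dcgs_w_def by (simp add: scaleR_sum_right mult.commute)

lemma Lop_zero: "dcgs_w E m (\<lambda>j. 0) i = 0"
  unfolding dcgs_w_def by simp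

lemma lap_norm_real:
  fixes c :: "nat \<Rightarrow> real"
  shows "(\<Sum>i\<in>{1..m}. (\<Sum>j\<in>{1..m}. lap E m i j * c j)\<^sup>2) \<le> (lap_norm E m)\<^sup>2 * (\<Sum>j\<in>{1..m}. (c j)\<^sup>2)"
proof -
  define S where "S = {sqrt (\<Sum>i\<in>{1..m}. (\<Sum>j\<in>{1..m}. lap E m i j * v j)\<^sup>2) | v.
                        (\<Sum>j\<in>{1..m}. (v j)\<^sup>2) = 1}"
  have ln: "lap_norm E m = Sup S" unfolding lap_norm_def S_def by simp
  define B where "B = (\<Sum>i\<in>{1..m}. (\<Sum>j\<in>{1..m}. \<bar>lap E m i j\<bar>)\<^sup>2)"
  have bdd: "bdd_above S"
  proof (rule bdd_aboveI)
    fix x assume "x \<in> S"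
    then obtain v where x: "x = sqrt (\<Sum>i\<in>{1..m}. (\<Sum>j\<in>{1..m}. lap E m i j * v j)\<^sup>2)"
      and v: "(\<Sum>j\<in>{1..m}. (v j)\<^sup>2) = 1" unfolding S_def by auto
    have vj: "\<bar>v j\<bar> \<le> 1" if "j \<in> {1..m}" for j
    proof -
      have "(v j)\<^sup>2 \<le> (\<Sum>j\<in>{1..m}. (v j)\<^sup>2)"
        by (rule member_le_sum) (use that in auto)
      then have "(v j)\<^sup>2 \<le> 1\<^sup>2" using v by simp
      then show ?thesis using abs_le_square_iff by (metis abs_one)
    qed
    have "(\<Sum>i\<in>{1..m}. (\<Sum>j\<in>{1..m}. lap E m i j * v j)\<^sup>2) \<le> B"
      unfolding B_def
    proof (rule sum_mono)
      fix i assume "i \<in> {1..m}"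
      have "\<bar>\<Sum>j\<in>{1..m}. lap E m i j * v j\<bar> \<le> (\<Sum>j\<in>{1..m}. \<bar>lap E m i j * v j\<bar>)"
        by (rule sum_abs)
      also have "\<dots> \<le> (\<Sum>j\<in>{1..m}. \<bar>lap E m i j\<bar>)"
        by (rule sum_mono) (use vj in \<open>auto simp: abs_mult intro: mult_left_le\<close>)
      finally show "(\<Sum>j\<in>{1..m}. lap E m i j * v j)\<^sup>2 \<le> (\<Sum>j\<in>{1..m}. \<bar>lap E m i j\<bar>)\<^sup>2"
        by (metis abs_le_square_iff abs_of_nonneg sum_nonneg abs_ge_zero order_trans abs_ge_self)
    qed
    then show "x \<le> sqrt B" unfolding x by simp
  qed
  define s where "s = (\<Sum>j\<in>{1..m}. (c j)\<^sup>2)"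
  show ?thesis
  proof (cases "s = 0")
    case True
    then have "\<forall>j\<in>{1..m}. c j = 0" unfolding s_def
      by (subst (asm) sum_nonneg_eq_0_iff) auto
    then show ?thesis by simp
  next
    case False
    have spos: "s > 0" using False unfolding s_def by (metis less_eq_real_def sum_nonneg zero_le_power2)
    define v where "v j = c j / sqrt s" for j
    have "(\<Sum>j\<in>{1..m}. (v j)\<^sup>2) = (\<Sum>j\<in>{1..m}. (c j)\<^sup>2) / s"
      unfolding v_def using spos by (simp add: power_divide sum_divide_distrib)
    then have v1: "(\<Sum>j\<in>{1..m}. (v j)\<^sup>2) = 1" using spos unfolding s_def by simp
    have mem: "sqrt (\<Sum>i\<in>{1..m}. (\<Sum>j\<in>{1..m}. lap E m i j * v j)\<^sup>2) \<in> S"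
      unfolding S_def using v1 by blast
    have le: "sqrt (\<Sum>i\<in>{1..m}. (\<Sum>j\<in>{1..m}. lap E m i j * v j)\<^sup>2) \<le> lap_norm E m"
      unfolding ln by (rule cSup_upper[OF mem bdd])
    have "(\<Sum>i\<in>{1..m}. (\<Sum>j\<in>{1..m}. lap E m i j * v j)\<^sup>2) \<le> (lap_norm E m)\<^sup>2"
    proof -
      have h0: "0 \<le> (\<Sum>i\<in>{1..m}. (\<Sum>j\<in>{1..m}. lap E m i j * v j)\<^sup>2)"
        by (meson sum_nonneg zero_le_power2)
      have "(sqrt (\<Sum>i\<in>{1..m}. (\<Sum>j\<in>{1..m}. lap E m i j * v j)\<^sup>2))\<^sup>2 \<le> (lap_norm E m)\<^sup>2"
        by (rule power_mono[OF le]) (rule real_sqrt_ge_zero[OF h0])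
      then show ?thesis using h0 by simp
    qed
    moreover have "(\<Sum>i\<in>{1..m}. (\<Sum>j\<in>{1..m}. lap E m i j * v j)\<^sup>2)
       = (\<Sum>i\<in>{1..m}. (\<Sum>j\<in>{1..m}. lap E m i j * c j)\<^sup>2) / s"
    proof -
      have "(\<Sum>j\<in>{1..m}. lap E m i j * v j) = (\<Sum>j\<in>{1..m}. lap E m i j * c j) / sqrt s" for i
        unfolding v_def by (simp add: sum_divide_distrib)
      then have "(\<Sum>i\<in>{1..m}. (\<Sum>j\<in>{1..m}. lap E m i j * v j)\<^sup>2)
          = (\<Sum>i\<in>{1..m}. (\<Sum>j\<in>{1..m}. lap E m i j * c j)\<^sup>2 / s)"
        using spos by (simp add: power_divide)
      also have "\<dots> = (\<Sum>i\<in>{1..m}. (\<Sum>j\<in>{1..m}. lap E m i j * c j)\<^sup>2) / s"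
        by (rule sum_divide_distrib[symmetric])
      finally show ?thesis .
    qed
    ultimately have "(\<Sum>i\<in>{1..m}. (\<Sum>j\<in>{1..m}. lap E m i j * c j)\<^sup>2) / s \<le> (lap_norm E m)\<^sup>2"
      by simp
    then show ?thesis using spos unfolding s_def[symmetric]
      by (simp add: divide_le_eq mult.commute)
  qed
qed

lemma Lop_norm:
  fixes a :: "nat \<Rightarrow> 'v::euclidean_space"
  shows "sqnorm m (dcgs_w E m a) \<le> (lap_norm E m)\<^sup>2 * sqnorm m a"
proof -
  have nb: "(norm (v::'v))\<^sup>2 = (\<Sum>b\<in>Basis. (inner v b)\<^sup>2)" for v
    unfolding power2_norm_eq_inner by (subst euclidean_inner) (simp add: power2_eq_square)
  have ib: "inner (dcgs_w E m a i) b = (\<Sum>j\<in>{1..m}. lap E m i j * inner (a j) b)" for i b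
    unfolding dcgs_w_def by (simp add: inner_sum_left)
  have "sqnorm m (dcgs_w E m a) = (\<Sum>i\<in>{1..m}. \<Sum>b\<in>Basis. (\<Sum>j\<in>{1..m}. lap E m i j * inner (a j) b)\<^sup>2)"
    unfolding sqnorm_def nb ib ..
  also have "\<dots> = (\<Sum>b\<in>Basis. \<Sum>i\<in>{1..m}. (\<Sum>j\<in>{1..m}. lap E m i j * inner (a j) b)\<^sup>2)"
    by (rule sum.swap)
  also have "\<dots> \<le> (\<Sum>b\<in>(Basis::'v set). (lap_norm E m)\<^sup>2 * (\<Sum>j\<in>{1..m}. (inner (a j) b)\<^sup>2))"
    by (rule sum_mono) (rule lap_norm_real)
  also have "\<dots> = (lap_norm E m)\<^sup>2 * (\<Sum>b\<in>(Basis::'v set). \<Sum>j\<in>{1..m}. (inner (a j) b)\<^sup>2)"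
    by (simp add: sum_distrib_left)
  also have "\<dots> = (lap_norm E m)\<^sup>2 * (\<Sum>j\<in>{1..m}. \<Sum>b\<in>(Basis::'v set). (inner (a j) b)\<^sup>2)"
    by (subst sum.swap) (rule refl)
  also have "\<dots> = (lap_norm E m)\<^sup>2 * sqnorm m a"
    unfolding sqnorm_def nb ..
  finally show ?thesis .
qed

lemma young_vec:
  fixes A b :: "'v::real_inner"
  assumes "P > 0"
  shows "c * inner A b \<le> P * (norm b)\<^sup>2 + c\<^sup>2 / (4 * P) * (norm A)\<^sup>2"
proof -
  have "0 \<le> (norm ((2 * P) *\<^sub>R b - c *\<^sub>R A))\<^sup>2" by simp
  also have "\<dots> = 4 * P\<^sup>2 * (norm b)\<^sup>2 - 4 * P * c * inner A b + c\<^sup>2 * (norm A)\<^sup>2"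
    unfolding power2_norm_eq_inner inner_diff_left inner_diff_right inner_scaleR_left inner_scaleR_right
    by (simp add: inner_commute[of b A] power2_eq_square algebra_simps)
  finally have h: "4 * P * (c * inner A b) \<le> 4 * P * (P * (norm b)\<^sup>2 + c\<^sup>2 / (4 * P) * (norm A)\<^sup>2)"
    using assms by (simp add: algebra_simps power2_eq_square)
  show ?thesis using mult_left_le_imp_le[OF h] assms by simp
qed

lemma young_Lop:
  fixes a b :: "nat \<Rightarrow> 'v::euclidean_space"
  assumes P: "P \<ge> 0" and Q: "Q \<ge> 0" and c: "c\<^sup>2 * (lap_norm E m)\<^sup>2 \<le> 4 * P * Q"
  shows "c * ipm m (dcgs_w E m a) b \<le> P * sqnorm m b + Q * sqnorm m a"
proof (cases "P = 0")
  case True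
  have sa: "sqnorm m a \<ge> 0" "sqnorm m b \<ge> 0" unfolding sqnorm_def by (auto intro: sum_nonneg)
  from c True have "c\<^sup>2 * (lap_norm E m)\<^sup>2 \<le> 0" by simp
  then have "c\<^sup>2 * (lap_norm E m)\<^sup>2 = 0"
    by (intro antisym) auto
  then have "c = 0 \<or> lap_norm E m = 0" by simp
  then show ?thesis
  proof
    assume "c = 0" then show ?thesis using sa P Q by simp
  next
    assume ln: "lap_norm E m = 0"
    have "sqnorm m (dcgs_w E m a) \<le> 0" using Lop_norm[of m E a] ln by simp
    then have "sqnorm m (dcgs_w E m a) = 0"
      unfolding sqnorm_def by (meson antisym sum_nonneg zero_le_power2)
    then have "\<forall>i\<in>{1..m}. (norm (dcgs_w E m a i))\<^sup>2 = 0"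
      unfolding sqnorm_def by (subst (asm) sum_nonneg_eq_0_iff) auto
    then have "ipm m (dcgs_w E m a) b = 0" unfolding ipm_def by simp
    then show ?thesis using sa P Q by simp
  qed
next
  case False
  then have Pp: "P > 0" using P by simp
  have "c * ipm m (dcgs_w E m a) b = (\<Sum>i\<in>{1..m}. c * inner (dcgs_w E m a i) (b i))"
    unfolding ipm_def by (simp add: sum_distrib_left)
  also have "\<dots> \<le> (\<Sum>i\<in>{1..m}. P * (norm (b i))\<^sup>2 + c\<^sup>2 / (4 * P) * (norm (dcgs_w E m a i))\<^sup>2)"
    by (rule sum_mono) (rule young_vec[OF Pp])
  also have "\<dots> = P * sqnorm m b + c\<^sup>2 / (4 * P) * sqnorm m (dcgs_w E m a)"
    unfolding sqnorm_def by (simp add: sum.distrib sum_distrib_left)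
  also have "\<dots> \<le> P * sqnorm m b + c\<^sup>2 / (4 * P) * ((lap_norm E m)\<^sup>2 * sqnorm m a)"
    using Lop_norm[of m E a] Pp by (intro add_left_mono mult_left_mono) auto
  also have "\<dots> \<le> P * sqnorm m b + Q * sqnorm m a"
  proof -
    have sa: "sqnorm m a \<ge> 0" unfolding sqnorm_def by (auto intro: sum_nonneg)
    have "c\<^sup>2 / (4 * P) * (lap_norm E m)\<^sup>2 \<le> Q" using c Pp by (simp add: divide_le_eq mult.commute)
    then have "c\<^sup>2 / (4 * P) * (lap_norm E m)\<^sup>2 * sqnorm m a \<le> Q * sqnorm m a"
      using sa by (rule mult_right_mono)
    then show ?thesis by simp
  qed
  finally show ?thesis .
qed

lemma sq_expand:
  fixes p q x :: "'v::real_inner"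
  shows "(norm (q - x))\<^sup>2 = (norm (p - x))\<^sup>2 + 2 * inner (p - x) (q - p) + (norm (q - p))\<^sup>2"
proof -
  have "q - x = (p - x) + (q - p)" by simp
  then have "(norm (q - x))\<^sup>2 = (norm ((p - x) + (q - p)))\<^sup>2" by simp
  also have "\<dots> = (norm (p - x))\<^sup>2 + 2 * inner (p - x) (q - p) + (norm (q - p))\<^sup>2"
    unfolding power2_norm_eq_inner inner_add_left inner_add_right
    by (simp add: inner_commute[of "q - p" "p - x"])
  finally show ?thesis .
qed

lemma phi_identity:
  fixes p q x w :: "'v::real_inner"
  shows "cg_phi f x w \<eta> q - cg_phi f x w \<eta> p - inner (cg_grad gf x w \<eta> p) (q - p)
     = (f q - f p - inner (gf p) (q - p)) + \<eta> / 2 * (norm (q - p))\<^sup>2"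
  unfolding cg_phi_def cg_grad_def sq_expand[of q x p]
  by (simp add: inner_add_left inner_diff_right algebra_simps)

lemma fw_count:
  fixes X :: "'v::euclidean_space set" and f :: "'v \<Rightarrow> real"
  assumes cX: "compact X" and vX: "convex X"
    and deriv: "\<forall>z. (f has_derivative (\<lambda>h. inner (gf z) h)) (at z)"
    and lower: "\<forall>p q. 0 \<le> f q - f p - inner (gf p) (q - p)"
    and upper: "\<forall>p q. f q - f p - inner (gf p) (q - p) \<le> l / 2 * (norm (q - p))\<^sup>2"
    and eta: "\<eta> \<ge> 0" and lpos: "l \<ge> 0" and epos: "e > 0"
    and dd: "\<forall>a\<in>X. \<forall>b\<in>X. (norm (a - b))\<^sup>2 \<le> dd"
    and run: "cg_partial X f gf x w \<eta> e z s T"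
  shows "real (T + 1) \<le> 2 + 16 * ((l + \<eta>) * dd) / e"
proof -
  define \<phi> where "\<phi> = cg_phi f x w \<eta>"
  define g where "g = cg_grad gf x w \<eta>"
  define G where "G t = inner (g (z t)) (z t - s t)" for t
  define C where "C = (l + \<eta>) * dd"
  define \<gamma> where "\<gamma> t = 2 / (real t + 2)" for t :: nat
  have z0: "z 0 \<in> X" and lo: "\<And>t. t \<le> T \<Longrightarrow> is_lo X (g (z t)) (s t)"
    and step: "\<And>t. t < T \<Longrightarrow> G t > e \<and> (z (Suc t) = (1 - \<gamma> t) *\<^sub>R z t + \<gamma> t *\<^sub>R s t
           \<or> (\<exists>\<gamma>'\<in>{0..1}. z (Suc t) = (1 - \<gamma>') *\<^sub>R z t + \<gamma>' *\<^sub>R s t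
                \<and> (\<forall>\<gamma>''\<in>{0..1}. \<phi> (z (Suc t)) \<le> \<phi> ((1 - \<gamma>'') *\<^sub>R z t + \<gamma>'' *\<^sub>R s t))))"
    using run unfolding cg_partial_def \<phi>_def g_def G_def \<gamma>_def by auto
  have sX: "s t \<in> X" if "t \<le> T" for t using lo[OF that] unfolding is_lo_def by auto
  have ga01: "\<gamma> t \<in> {0..1}" for t unfolding \<gamma>_def by auto
  have zX: "t \<le> T \<Longrightarrow> z t \<in> X" for t
  proof (induction t)
    case 0 then show ?case using z0 by simp
  next
    case (Suc t)
    then have tT: "t < T" and zt: "z t \<in> X" and st: "s t \<in> X" using sX by auto
    from step[OF tT] obtain c where c: "c \<in> {0..1}" and zc: "z (Suc t) = (1 - c) *\<^sub>R z t + c *\<^sub>R s t"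
      using ga01 by blast
    show ?case unfolding zc using c zt st by (intro convexD[OF vX]) auto
  qed
  have Cnn: "C \<ge> 0" unfolding C_def
  proof -
    have "dd \<ge> 0" using dd z0 by (meson order_trans zero_le_power2)
    then show "(l + \<eta>) * dd \<ge> 0" using lpos eta by simp
  qed
  have convphi: "\<phi> q \<ge> \<phi> p + inner (g p) (q - p)" for p q
    using phi_identity[of f x w \<eta> q p gf] lower eta unfolding \<phi>_def g_def
    by (smt (verit) zero_le_power2 mult_nonneg_nonneg divide_nonneg_nonneg)
  have smooth: "\<phi> q \<le> \<phi> p + inner (g p) (q - p) + (l + \<eta>) / 2 * (norm (q - p))\<^sup>2" for p q
  proof -
    have u: "f q - f p - inner (gf p) (q - p) \<le> l / 2 * (norm (q - p))\<^sup>2" using upper by blast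
    have "(l + \<eta>) / 2 * (norm (q - p))\<^sup>2 = l / 2 * (norm (q - p))\<^sup>2 + \<eta> / 2 * (norm (q - p))\<^sup>2"
      by (simp add: algebra_simps add_divide_distrib)
    then show ?thesis using phi_identity[of f x w \<eta> q p gf] u unfolding \<phi>_def g_def by linarith
  qed
  have desc_q: "\<phi> ((1 - c) *\<^sub>R z t + c *\<^sub>R s t) \<le> \<phi> (z t) - c * G t + c\<^sup>2 * C / 2"
    if "t \<le> T" "c \<ge> 0" for t c
  proof -
    have qz: "(1 - c) *\<^sub>R z t + c *\<^sub>R s t - z t = c *\<^sub>R (s t - z t)" by (simp add: algebra_simps)
    have nd: "(norm (s t - z t))\<^sup>2 \<le> dd" using dd sX zX that by auto
    have "\<phi> ((1 - c) *\<^sub>R z t + c *\<^sub>R s t) \<le> \<phi> (z t) + inner (g (z t)) (c *\<^sub>R (s t - z t))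
           + (l + \<eta>) / 2 * (norm (c *\<^sub>R (s t - z t)))\<^sup>2"
      using smooth[where p="z t" and q="(1 - c) *\<^sub>R z t + c *\<^sub>R s t"] unfolding qz .
    also have "inner (g (z t)) (c *\<^sub>R (s t - z t)) = - c * G t"
      unfolding G_def by (simp add: inner_diff_right algebra_simps)
    also have "(norm (c *\<^sub>R (s t - z t)))\<^sup>2 = c\<^sup>2 * (norm (s t - z t))\<^sup>2"
      by (simp add: power_mult_distrib)
    also have "(l + \<eta>) / 2 * (c\<^sup>2 * (norm (s t - z t))\<^sup>2) \<le> (l + \<eta>) / 2 * (c\<^sup>2 * dd)"
      using nd lpos eta by (intro mult_left_mono) auto
    finally show ?thesis unfolding C_def by (simp add: algebra_simps)
  qed
  have desc: "\<phi> (z (Suc t)) \<le> \<phi> (z t) - \<gamma> t * G t + (\<gamma> t)\<^sup>2 * C / 2" if "t < T" for t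
  proof -
    have q: "\<phi> ((1 - \<gamma> t) *\<^sub>R z t + \<gamma> t *\<^sub>R s t) \<le> \<phi> (z t) - \<gamma> t * G t + (\<gamma> t)\<^sup>2 * C / 2"
      using desc_q[of t "\<gamma> t"] that ga01 by auto
    from step[OF that] show ?thesis
    proof (elim conjE disjE)
      assume "z (Suc t) = (1 - \<gamma> t) *\<^sub>R z t + \<gamma> t *\<^sub>R s t" then show ?thesis using q by simp
    next
      assume "\<exists>\<gamma>'\<in>{0..1}. z (Suc t) = (1 - \<gamma>') *\<^sub>R z t + \<gamma>' *\<^sub>R s t
                \<and> (\<forall>\<gamma>''\<in>{0..1}. \<phi> (z (Suc t)) \<le> \<phi> ((1 - \<gamma>'') *\<^sub>R z t + \<gamma>'' *\<^sub>R s t))"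
      then have "\<phi> (z (Suc t)) \<le> \<phi> ((1 - \<gamma> t) *\<^sub>R z t + \<gamma> t *\<^sub>R s t)" using ga01 by blast
      then show ?thesis using q by simp
    qed
  qed
  have contf: "continuous_on X f"
    using deriv by (meson continuous_at_imp_continuous_on has_derivative_continuous)
  have contphi: "continuous_on X \<phi>"
    unfolding \<phi>_def cg_phi_def by (intro continuous_intros contf)
  obtain p where pX: "p \<in> X" and pmin: "\<forall>y\<in>X. \<phi> p \<le> \<phi> y"
    using continuous_attains_inf[OF cX _ contphi] z0 by blast
  define h where "h t = \<phi> (z t) - \<phi> p" for t
  have hnn: "h t \<ge> 0" if "t \<le> T" for t using pmin zX[OF that] unfolding h_def by auto
  have Gh: "h t \<le> G t" if "t \<le> T" for t
  proof -
    have "inner (g (z t)) (s t) \<le> inner (g (z t)) p" using lo[OF that] pX unfolding is_lo_def by auto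
    then have "inner (g (z t)) (p - z t) \<ge> - G t" unfolding G_def by (simp add: inner_diff_right)
    then show ?thesis using convphi[where p="z t" and q=p] unfolding h_def by linarith
  qed
  have hdesc: "h (Suc t) \<le> h t - \<gamma> t * G t + (\<gamma> t)\<^sup>2 * C / 2" if "t < T" for t
    using desc[OF that] unfolding h_def by simp
  have hrate: "1 \<le> t \<Longrightarrow> t \<le> T \<Longrightarrow> h t \<le> 2 * C / (real t + 2)" for t
  proof (induction t)
    case 0 then show ?case by simp
  next
    case (Suc t)
    show ?case
    proof (cases "t = 0")
      case True
      have "h 1 \<le> h 0 - G 0 + C / 2" using hdesc[of 0] Suc.prems True unfolding \<gamma>_def by simp
      also have "\<dots> \<le> C / 2" using Gh[of 0] by simp
      also have "\<dots> \<le> 2 * C / 3" using Cnn by simp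
      finally show ?thesis using True by simp
    next
      case False
      then have IH: "h t \<le> 2 * C / (real t + 2)" using Suc by simp
      have tT: "t < T" using Suc.prems by simp
      have g: "\<gamma> t = 2 / (real t + 2)" "\<gamma> t \<ge> 0" "\<gamma> t \<le> 1" unfolding \<gamma>_def by auto
      have "h (Suc t) \<le> h t - \<gamma> t * G t + (\<gamma> t)\<^sup>2 * C / 2" by (rule hdesc[OF tT])
      also have "\<dots> \<le> (1 - \<gamma> t) * h t + (\<gamma> t)\<^sup>2 * C / 2"
      proof -
        have "\<gamma> t * h t \<le> \<gamma> t * G t" using Gh[of t] tT g by (intro mult_left_mono) auto
        then show ?thesis by (simp add: algebra_simps)
      qed
      also have "\<dots> \<le> (1 - \<gamma> t) * (2 * C / (real t + 2)) + (\<gamma> t)\<^sup>2 * C / 2"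
        using IH g by (intro add_right_mono mult_left_mono) auto
      also have "\<dots> = 2 * C * (real t + 1) / (real t + 2)\<^sup>2"
      proof -
        have r: "real t + 2 > 0" by simp
        have a1: "1 - 2 / (real t + 2) = real t / (real t + 2)" using r by (simp add: field_simps)
        have a2: "real t / (real t + 2) * (2 * C / (real t + 2)) = 2 * C * real t / (real t + 2)\<^sup>2"
          by (simp add: power2_eq_square)
        have a3: "(2 / (real t + 2))\<^sup>2 * C / 2 = 2 * C / (real t + 2)\<^sup>2"
          by (simp add: power_divide)
        show ?thesis unfolding g(1) a1 a2 a3 by (simp add: add_divide_distrib[symmetric] algebra_simps)
      qed
      also have "\<dots> \<le> 2 * C / (real (Suc t) + 2)"
      proof -
        have "(real t + 1) * (real t + 3) \<le> (real t + 2)\<^sup>2" by (simp add: power2_eq_square algebra_simps)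
        then have "(real t + 1) / (real t + 2)\<^sup>2 \<le> 1 / (real t + 3)"
          by (simp add: field_simps)
        then have "2 * C * ((real t + 1) / (real t + 2)\<^sup>2) \<le> 2 * C * (1 / (real t + 3))"
          using Cnn by (intro mult_left_mono) auto
        then show ?thesis by (simp add: add.commute)
      qed
      finally show ?thesis .
    qed
  qed
  show ?thesis
  proof (cases "T \<le> 1")
    case True
    have "0 \<le> 16 * ((l + \<eta>) * dd) / e" using Cnn epos unfolding C_def by simp
    then show ?thesis using True by simp
  next
    case False
    define a where "a = T div 2"
    have a1: "1 \<le> a" and aT: "a < T" and a2: "2 * a \<le> T" and a3: "T \<le> 2 * a + 1"
      using False unfolding a_def by auto
    define K where "K = 2 * e / (real T + 1) - 2 * C / (real a + 2)\<^sup>2"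
    have gstep: "\<gamma> t * G t - (\<gamma> t)\<^sup>2 * C / 2 \<ge> K" if "a \<le> t" "t < T" for t
    proof -
      have gpos: "\<gamma> t > 0" unfolding \<gamma>_def by simp
      have g1: "\<gamma> t \<ge> 2 / (real T + 1)" unfolding \<gamma>_def using that by (simp add: frac_le)
      have g2: "\<gamma> t \<le> 2 / (real a + 2)" unfolding \<gamma>_def using that by (simp add: frac_le)
      have "\<gamma> t * G t \<ge> \<gamma> t * e" using step[OF that(2)] gpos by simp
      moreover have "\<gamma> t * e \<ge> 2 / (real T + 1) * e" using mult_right_mono[OF g1, of e] epos by simp
      moreover have "(\<gamma> t)\<^sup>2 \<le> (2 / (real a + 2))\<^sup>2" using g2 gpos by (intro power_mono) auto
      then have "(\<gamma> t)\<^sup>2 * C / 2 \<le> (2 / (real a + 2))\<^sup>2 * C / 2"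
        using Cnn by (simp add: mult_right_mono divide_right_mono)
      moreover have "(2 / (real a + 2))\<^sup>2 * C / 2 = 2 * C / (real a + 2)\<^sup>2"
        by (simp add: power_divide)
      ultimately show ?thesis unfolding K_def by simp
    qed
    have hsum: "j \<le> T - a \<Longrightarrow> h (a + j) \<le> h a - real j * K" for j
    proof (induction j)
      case 0 then show ?case by simp
    next
      case (Suc j)
      then have "a + j < T" by simp
      then have "h (Suc (a + j)) \<le> h (a + j) - K"
        using hdesc[of "a + j"] gstep[of "a + j"] by simp
      then show ?case using Suc by (simp add: algebra_simps)
    qed
    have "0 \<le> h T" using hnn by simp
    also have "h T \<le> h a - real (T - a) * K" using hsum[of "T - a"] aT by simp
    also have "h a \<le> 2 * C / (real a + 2)" using hrate a1 aT by simp
    finally have main: "real (T - a) * (2 * e / (real T + 1)) \<le> 2 * C / (real a + 2) + real (T - a) * (2 * C / (real a + 2)\<^sup>2)"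
      unfolding K_def by (simp add: algebra_simps)
    have Ta: "real (T - a) = real T - real a" using aT by simp
    have ra: "2 * real a \<le> real T" "real T \<le> 2 * real a + 1" using a2 a3 by linarith+
    have lhs: "e / 2 \<le> real (T - a) * (2 * e / (real T + 1))"
    proof -
      have "real T + 1 \<le> 2 * (real T - real a) * 2" using ra False by (simp add: not_le)
      then have "(real T + 1) * e \<le> 2 * (real T - real a) * 2 * e" using epos by (simp add: mult_right_mono)
      then show ?thesis unfolding Ta by (simp add: field_simps)
    qed
    have r2: "real (T - a) * (2 * C / (real a + 2)\<^sup>2) \<le> 2 * C / (real a + 2)"
    proof -
      have "real (T - a) \<le> real a + 2" unfolding Ta using ra by linarith
      then have x1: "real (T - a) / (real a + 2) \<le> 1" by simp
      have "real (T - a) * (2 * C / (real a + 2)\<^sup>2) = (real (T - a) / (real a + 2)) * (2 * C / (real a + 2))"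
        by (simp add: power2_eq_square)
      also have "\<dots> \<le> 1 * (2 * C / (real a + 2))"
        using x1 Cnn by (intro mult_right_mono) auto
      finally show ?thesis by simp
    qed
    have "e / 2 \<le> 4 * C / (real a + 2)" using main lhs r2 by simp
    also have "\<dots> \<le> 8 * C / (real T + 1)"
    proof -
      have tt: "real T + 1 \<le> 2 * (real a + 2)" using ra(2) by (simp add: algebra_simps)
      have "4 * C * (real T + 1) \<le> 8 * C * (real a + 2)" using mult_left_mono[OF tt, of "4 * C"] Cnn by (simp add: algebra_simps)
      then show ?thesis by (simp add: field_simps)
    qed
    finally have "e * (real T + 1) \<le> 16 * C" by (simp add: field_simps)
    then have "real T + 1 \<le> 16 * C / e" using epos by (simp add: field_simps)
    then show ?thesis unfolding C_def by simp
  qed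
qed

lemma Lop_zero_norm:
  fixes a :: "nat \<Rightarrow> 'v::euclidean_space"
  assumes "lap_norm E m = 0" "i \<in> {1..m}"
  shows "dcgs_w E m a i = 0"
proof -
  have "sqnorm m (dcgs_w E m a) \<le> 0" using Lop_norm[of m E a] assms by simp
  then have "sqnorm m (dcgs_w E m a) = 0"
    unfolding sqnorm_def by (meson antisym sum_nonneg zero_le_power2)
  then have "\<forall>i\<in>{1..m}. (norm (dcgs_w E m a i))\<^sup>2 = 0"
    unfolding sqnorm_def by (subst (asm) sum_nonneg_eq_0_iff) auto
  then show ?thesis using assms by simp
qed

lemma agent_step:
  fixes X :: "'v::real_inner set"
  assumes run: "cg_complete X f gf xp w \<eta> e Z S T" and xs: "xs \<in> X"
    and sc: "\<forall>p q. u / 2 * (norm (q - p))\<^sup>2 \<le> f q - f p - inner (gf p) (q - p)"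
  shows "f (Z T) - f xs + inner w (Z T - xs) + \<eta> / 2 * (norm (Z T - xp))\<^sup>2
     + (u + \<eta>) / 2 * (norm (Z T - xs))\<^sup>2 - \<eta> / 2 * (norm (xp - xs))\<^sup>2 \<le> e"
proof -
  define z where "z = Z T"
  define g where "g = cg_grad gf xp w \<eta> z"
  have gap: "inner g (z - S T) \<le> e" and lo: "is_lo X g (S T)"
    using run unfolding cg_complete_def cg_partial_def g_def z_def by auto
  have "inner g (S T) \<le> inner g xs" using lo xs unfolding is_lo_def by auto
  then have ge: "inner g (z - xs) \<le> e" using gap by (simp add: inner_diff_right)
  have gexp: "inner g (z - xs) = inner (gf z) (z - xs) + inner w (z - xs) + \<eta> * inner (z - xp) (z - xs)"
    unfolding g_def cg_grad_def by (simp add: inner_add_left)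
  have s1: "u / 2 * (norm (xs - z))\<^sup>2 \<le> f xs - f z - inner (gf z) (xs - z)" using sc by blast
  have n1: "norm (xs - z) = norm (z - xs)" by (rule norm_minus_commute)
  have i1: "inner (gf z) (xs - z) = - inner (gf z) (z - xs)"
    by (metis inner_minus_right minus_diff_eq)
  have e1: "(norm (xp - xs))\<^sup>2 = (norm (z - xs))\<^sup>2 + 2 * inner (z - xs) (xp - z) + (norm (xp - z))\<^sup>2"
    by (rule sq_expand)
  have i2: "inner (z - xs) (xp - z) = - inner (z - xp) (z - xs)"
    by (metis inner_commute inner_minus_right minus_diff_eq)
  have n2: "norm (xp - z) = norm (z - xp)" by (rule norm_minus_commute)
  have key: "\<eta> * inner (z - xp) (z - xs) = \<eta> / 2 * (norm (z - xp))\<^sup>2 + \<eta> / 2 * (norm (z - xs))\<^sup>2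
      - \<eta> / 2 * (norm (xp - xs))\<^sup>2"
    unfolding e1 i2 n2 by (simp add: algebra_simps)
  have "(u + \<eta>) / 2 * (norm (z - xs))\<^sup>2 = u / 2 * (norm (z - xs))\<^sup>2 + \<eta> / 2 * (norm (z - xs))\<^sup>2"
    by (simp add: algebra_simps add_divide_distrib)
  then show ?thesis using ge gexp s1 key unfolding n1 i1 z_def[symmetric] by linarith
qed

lemma inner_self_diff:
  fixes a b :: "'v::real_inner"
  shows "inner a (a - b) = ((norm a)\<^sup>2 - (norm b)\<^sup>2 + (norm (a - b))\<^sup>2) / 2"
  unfolding power2_norm_eq_inner by (simp add: inner_diff_left inner_diff_right inner_commute[of b a] field_simps)

lemma dcgs_conv:
  fixes X :: "'v::euclidean_space set"
  assumes sym: "\<forall>i j. E i j \<longrightarrow> E j i" and m1: "m \<ge> 1" and u: "u > 0"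
    and sc: "\<forall>i\<in>{1..m}. \<forall>p q. u / 2 * (norm (q - p))\<^sup>2 \<le> f i q - f i p - inner (gf i p) (q - p)"
    and xsX: "\<forall>i\<in>{1..m}. xs i \<in> X" and cons: "consensus E m xs"
    and N1: "N \<ge> 1"
    and Da: "u * sqdist m x0 xs \<le> D" and Db: "(lap_norm E m)\<^sup>2 * sqnorm m y0 / u \<le> D"
    and ex: "dcgs_exec X E m f gf par_alpha (par_tau u (lap_norm E m)) (par_eta u) (par_e D m N)
                 x0 y0 N x y Z S T"
  shows "(\<Sum>k\<in>{1..N}. (real k + 1) * (Fsum m f (x k) - Fsum m f xs)) \<le> 9 / 2 * D"
proof -
  define Ln where "Ln = lap_norm E m"
  define P where "P = 2 * Ln\<^sup>2 / u"
  define Fk where "Fk k = Fsum m f (x k) - Fsum m f xs" for k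
  define a where "a k = sqdist m (x k) xs" for k
  define b where "b k = sqnorm m (y k)" for k
  define d where "d k = sqdist m (x k) (x (k - 1))" for k
  define p where "p k = ipm m (dcgs_w E m (\<lambda>j. x k j - x (k - 1) j)) (y k)" for k
  define q where "q k = sqdist m (y k) (y (k - 1))" for k
  define r where "r k = ipm m (dcgs_w E m (\<lambda>j. x (k - 1) j - x (k - 2) j)) (\<lambda>j. y k j - y (k - 1) j)" for k
  have x0: "x 0 = x0" and y0: "y 0 = y0" using ex unfolding dcgs_exec_def by auto
  have exk: "\<And>k i. k \<in> {1..N} \<Longrightarrow> i \<in> {1..m} \<Longrightarrow>
        y k i = dcgs_y E m par_alpha (par_tau u Ln) x y k i
      \<and> cg_complete X (f i) (gf i) (x (k - 1) i) (dcgs_w E m (y k) i) (par_eta u k) (par_e D m N k i)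
                    (Z k i) (S k i) (T k i)
      \<and> x k i = Z k i (T k i)"
    using ex unfolding dcgs_exec_def Ln_def by blast
  have Dnn: "D \<ge> 0"
  proof -
    have "sqdist m x0 xs \<ge> 0" unfolding sqdist_def by (auto intro: sum_nonneg)
    then show ?thesis using Da u by (meson order_trans zero_le_mult_iff less_imp_le)
  qed
  have sqnn: "sqnorm m v \<ge> 0" for v :: "nat \<Rightarrow> 'v" unfolding sqnorm_def by (auto intro: sum_nonneg)
  have sqdnn: "sqdist m v w \<ge> 0" for v w :: "nat \<Rightarrow> 'v" unfolding sqdist_def by (auto intro: sum_nonneg)
  have sqd_sqn: "sqdist m v w = sqnorm m (\<lambda>j. v j - w j)" for v w :: "nat \<Rightarrow> 'v"
    unfolding sqdist_def sqnorm_def by simp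
  have S1: "Fk k + ipm m (dcgs_w E m (y k)) (\<lambda>i. x k i - xs i) + par_eta u k / 2 * d k
      + (u + par_eta u k) / 2 * a k - par_eta u k / 2 * a (k - 1) \<le> D / (real N * real k)"
    if k: "k \<in> {1..N}" for k
  proof -
    have ag: "f i (x k i) - f i (xs i) + inner (dcgs_w E m (y k) i) (x k i - xs i)
       + par_eta u k / 2 * (norm (x k i - x (k - 1) i))\<^sup>2
       + (u + par_eta u k) / 2 * (norm (x k i - xs i))\<^sup>2 - par_eta u k / 2 * (norm (x (k - 1) i - xs i))\<^sup>2
       \<le> par_e D m N k i" if i: "i \<in> {1..m}" for i
      using agent_step[OF conjunct1[OF conjunct2[OF exk[OF k i]]], of "xs i" u] xsX sc i
        conjunct2[OF conjunct2[OF exk[OF k i]]] by auto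
    have "(\<Sum>i\<in>{1..m}. f i (x k i) - f i (xs i) + inner (dcgs_w E m (y k) i) (x k i - xs i)
       + par_eta u k / 2 * (norm (x k i - x (k - 1) i))\<^sup>2
       + (u + par_eta u k) / 2 * (norm (x k i - xs i))\<^sup>2 - par_eta u k / 2 * (norm (x (k - 1) i - xs i))\<^sup>2)
       \<le> (\<Sum>i\<in>{1..m}. par_e D m N k i)"
      by (rule sum_mono) (rule ag)
    also have "(\<Sum>i\<in>{1..m}. par_e D m N k i) = D / (real N * real k)"
      unfolding par_e_def using m1 by simp
    also have "(\<Sum>i\<in>{1..m}. f i (x k i) - f i (xs i) + inner (dcgs_w E m (y k) i) (x k i - xs i)
       + par_eta u k / 2 * (norm (x k i - x (k - 1) i))\<^sup>2
       + (u + par_eta u k) / 2 * (norm (x k i - xs i))\<^sup>2 - par_eta u k / 2 * (norm (x (k - 1) i - xs i))\<^sup>2)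
       = Fk k + ipm m (dcgs_w E m (y k)) (\<lambda>i. x k i - xs i) + par_eta u k / 2 * d k
      + (u + par_eta u k) / 2 * a k - par_eta u k / 2 * a (k - 1)"
      unfolding Fk_def Fsum_def ipm_def d_def a_def sqdist_def
      by (simp add: sum.distrib sum_subtractf sum_distrib_left)
    finally show ?thesis .
  qed
  have S3: "dcgs_w E m (dcgs_xt par_alpha x k) i = par_tau u Ln k *\<^sub>R (y k i - y (k - 1) i)"
    if k: "k \<in> {1..N}" and i: "i \<in> {1..m}" for k i
  proof -
    have yk: "y k i = y (k - 1) i + (1 / par_tau u Ln k) *\<^sub>R dcgs_w E m (dcgs_xt par_alpha x k) i"
      using exk[OF k i] unfolding dcgs_y_def dcgs_w_def by simp
    show ?thesis
    proof (cases "par_tau u Ln k = 0")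
      case True
      then have "Ln = 0" unfolding par_tau_def using u by simp
      then show ?thesis using Lop_zero_norm[of E m i] i True unfolding Ln_def by simp
    next
      case False
      then show ?thesis unfolding yk by simp
    qed
  qed
  have S2: "ipm m (dcgs_w E m (y k)) (\<lambda>i. x k i - xs i)
      = par_tau u Ln k / 2 * (b k - b (k - 1) + q k) - par_alpha k * (p (k - 1) + r k) + p k"
    if k: "k \<in> {1..N}" for k
  proof -
    define xt where "xt = dcgs_xt par_alpha x k"
    define D1 where "D1 j = x (k - 1) j - x (k - 2) j" for j
    define D0 where "D0 j = x k j - x (k - 1) j" for j
    have xs0: "dcgs_w E m xs i = 0" if "i \<in> {1..m}" for i
      using cons that unfolding consensus_def dcgs_w_def by blast
    have "ipm m (dcgs_w E m (y k)) (\<lambda>i. x k i - xs i) = ipm m (y k) (dcgs_w E m (\<lambda>i. x k i - xs i))"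
      by (rule ipm_Lop_sym[OF sym])
    also have "\<dots> = ipm m (y k) (dcgs_w E m (x k))"
      unfolding ipm_def by (rule sum.cong) (auto simp: Lop_diff xs0)
    also have "ipm m (y k) (dcgs_w E m (x k))
       = ipm m (y k) (dcgs_w E m xt) - par_alpha k * ipm m (y k) (dcgs_w E m D1) + ipm m (y k) (dcgs_w E m D0)"
    proof -
      have xk: "x k = (\<lambda>j. (xt j - par_alpha k *\<^sub>R D1 j) + D0 j)"
        unfolding xt_def D1_def D0_def dcgs_xt_def by (simp add: algebra_simps)
      show ?thesis
        by (subst xk, unfold ipm_def Lop_add Lop_diff Lop_scale)
          (simp add: inner_add_right inner_diff_right sum.distrib sum_subtractf sum_distrib_left)
    qed
    also have "ipm m (y k) (dcgs_w E m xt) = par_tau u Ln k / 2 * (b k - b (k - 1) + q k)"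
    proof -
      have "ipm m (y k) (dcgs_w E m xt) = (\<Sum>i\<in>{1..m}. par_tau u Ln k * inner (y k i) (y k i - y (k - 1) i))"
        unfolding ipm_def xt_def by (rule sum.cong) (auto simp: S3[OF k])
      also have "\<dots> = par_tau u Ln k / 2 * (b k - b (k - 1) + q k)"
      proof -
        have "(\<Sum>i\<in>{1..m}. par_tau u Ln k * inner (y k i) (y k i - y (k - 1) i))
            = par_tau u Ln k * (\<Sum>i\<in>{1..m}. inner (y k i) (y k i - y (k - 1) i))"
          by (rule sum_distrib_left[symmetric])
        also have "(\<Sum>i\<in>{1..m}. inner (y k i) (y k i - y (k - 1) i))
            = (\<Sum>i\<in>{1..m}. ((norm (y k i))\<^sup>2 - (norm (y (k - 1) i))\<^sup>2 + (norm (y k i - y (k - 1) i))\<^sup>2) / 2)"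
          unfolding inner_self_diff ..
        also have "\<dots> = (b k - b (k - 1) + q k) / 2"
          unfolding b_def q_def sqnorm_def sqdist_def sum_divide_distrib[symmetric]
          by (simp add: sum.distrib sum_subtractf)
        finally show ?thesis by simp
      qed
      finally show ?thesis .
    qed
    also have "ipm m (y k) (dcgs_w E m D1) = p (k - 1) + r k"
    proof -
      have "k - 1 - 1 = k - 2" by simp
      then have "p (k - 1) = ipm m (dcgs_w E m D1) (y (k - 1))" unfolding p_def D1_def by simp
      then show ?thesis unfolding r_def D1_def[symmetric] ipm_def
        by (simp add: inner_commute inner_diff_right sum_subtractf)
    qed
    also have "ipm m (y k) (dcgs_w E m D0) = p k"
      unfolding p_def D0_def ipm_def by (simp add: inner_commute)
    finally show ?thesis .
  qed
  define cB where "cB n = (real n + 1) * (real n + 2) * u / 4" for n :: nat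
  define cD where "cD n = (real n + 1) * real n * u / 4" for n :: nat
  have Lnn: "Ln\<^sup>2 \<ge> 0" by simp
  have Pnn: "P \<ge> 0" unfolding P_def using u by simp
  have I1: "(real (Suc n) + 1) * Fk (Suc n) \<le> cB n * a n - cB (Suc n) * a (Suc n) - cD (Suc n) * d (Suc n)
      + P * b n - P * b (Suc n) - P * q (Suc n) - (real (Suc n) + 1) * p (Suc n)
      + (real n + 1) * p n + (real n + 1) * r (Suc n) + (real (Suc n) + 1) * (D / (real N * real (Suc n)))"
    if n: "n < N" for n
  proof -
    define k where "k = Suc n"
    have k: "k \<in> {1..N}" using n unfolding k_def by simp
    have kn: "k - 1 = n" unfolding k_def by simp
    define \<tau> where "\<tau> = par_tau u Ln k"
    define \<alpha> where "\<alpha> = par_alpha k"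
    define \<eta> where "\<eta> = par_eta u k"
    have L: "Fk k + (\<tau> / 2 * (b k - b n + q k) - \<alpha> * (p n + r k) + p k) + \<eta> / 2 * d k
      + (u + \<eta>) / 2 * a k - \<eta> / 2 * a n \<le> D / (real N * real k)"
      using S1[OF k] S2[OF k] unfolding kn \<tau>_def \<alpha>_def \<eta>_def by simp
    have M: "(real k + 1) * (Fk k + (\<tau> / 2 * (b k - b n + q k) - \<alpha> * (p n + r k) + p k) + \<eta> / 2 * d k
      + (u + \<eta>) / 2 * a k - \<eta> / 2 * a n) \<le> (real k + 1) * (D / (real N * real k))"
      by (rule mult_left_mono[OF L]) simp
    have eq: "(real k + 1) * (Fk k + (\<tau> / 2 * (b k - b n + q k) - \<alpha> * (p n + r k) + p k) + \<eta> / 2 * d k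
      + (u + \<eta>) / 2 * a k - \<eta> / 2 * a n)
      = (real k + 1) * Fk k + ((real k + 1) * (\<tau> / 2)) * b k - ((real k + 1) * (\<tau> / 2)) * b n
        + ((real k + 1) * (\<tau> / 2)) * q k - ((real k + 1) * \<alpha>) * p n - ((real k + 1) * \<alpha>) * r k
        + (real k + 1) * p k + ((real k + 1) * (\<eta> / 2)) * d k + ((real k + 1) * ((u + \<eta>) / 2)) * a k
        - ((real k + 1) * (\<eta> / 2)) * a n"
      by (simp add: field_simps)
    have c1: "(real k + 1) * (\<tau> / 2) = P"
    proof -
      have t: "\<tau> = (4 * Ln\<^sup>2 / u) / (real k + 1)"
        unfolding \<tau>_def par_tau_def by (simp add: divide_divide_eq_left mult.commute)
      have kp: "real k + 1 \<noteq> 0" by simp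
      have h1: "(real k + 1) * ((4 * Ln\<^sup>2 / u) / (real k + 1)) = 4 * Ln\<^sup>2 / u" using kp by simp
      have "(real k + 1) * ((4 * Ln\<^sup>2 / u) / (real k + 1) / 2) = ((real k + 1) * ((4 * Ln\<^sup>2 / u) / (real k + 1))) / 2"
        by simp
      also have "\<dots> = P" unfolding h1 P_def by simp
      finally show ?thesis unfolding t .
    qed
    have c2: "(real k + 1) * \<alpha> = real n + 1"
      unfolding \<alpha>_def par_alpha_def k_def by (simp add: field_simps)
    have c3: "(real k + 1) * (\<eta> / 2) = cD k"
      unfolding \<eta>_def par_eta_def cD_def by (simp add: field_simps)
    have c3': "cD k = cB n" unfolding cD_def cB_def k_def by (simp add: field_simps)
    have c4: "(real k + 1) * ((u + \<eta>) / 2) = cB k"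
      unfolding \<eta>_def par_eta_def cB_def by (simp add: field_simps)
    show ?thesis using M unfolding eq c1 c2 c3 c4 unfolding c3' k_def[symmetric] by linarith
  qed
  have I2: "(real n + 1) * r (Suc n) \<le> P * q (Suc n) + cD n * d n" if n: "n < N" for n
  proof (cases "n = 0")
    case True
    have "r (Suc n) = 0" unfolding r_def True ipm_def by (simp add: Lop_zero)
    moreover have "P * q (Suc n) \<ge> 0" using Pnn unfolding q_def by (simp add: sqdnn)
    moreover have "cD n = 0" unfolding cD_def True by simp
    ultimately show ?thesis by simp
  next
    case False
    have e1: "r (Suc n) = ipm m (dcgs_w E m (\<lambda>j. x n j - x (n - 1) j)) (\<lambda>j. y (Suc n) j - y n j)"
      unfolding r_def by (simp add: numeral_2_eq_2)
    have e2: "q (Suc n) = sqnorm m (\<lambda>j. y (Suc n) j - y n j)" unfolding q_def sqd_sqn by simp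
    have e3: "d n = sqnorm m (\<lambda>j. x n j - x (n - 1) j)" unfolding d_def sqd_sqn ..
    have "4 * P * cD n = 2 * (real n + 1) * real n * Ln\<^sup>2"
      unfolding P_def cD_def using u by (simp add: field_simps)
    moreover have "(real n + 1)\<^sup>2 * Ln\<^sup>2 \<le> 2 * (real n + 1) * real n * Ln\<^sup>2"
    proof -
      have h: "real n \<ge> 1" using False by simp
      have "1 \<le> real n * real n" using mult_mono[OF h h] by simp
      then have "(real n + 1)\<^sup>2 \<le> 2 * (real n + 1) * real n"
        by (simp add: power2_eq_square algebra_simps)
      then show ?thesis by (rule mult_right_mono) simp
    qed
    ultimately have cc: "(real n + 1)\<^sup>2 * (lap_norm E m)\<^sup>2 \<le> 4 * P * cD n" unfolding Ln_def by simp
    have cDn: "cD n \<ge> 0" unfolding cD_def using u by simp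
    show ?thesis unfolding e1 e2 e3 by (rule young_Lop[OF Pnn cDn cc])
  qed
  have I3: "- (real N + 1) * p N \<le> P * b N + cD N * d N"
  proof -
    have e3: "d N = sqnorm m (\<lambda>j. x N j - x (N - 1) j)" unfolding d_def sqd_sqn ..
    have "4 * P * cD N = 2 * (real N + 1) * real N * Ln\<^sup>2"
      unfolding P_def cD_def using u by (simp add: field_simps)
    moreover have "(- (real N + 1))\<^sup>2 * Ln\<^sup>2 \<le> 2 * (real N + 1) * real N * Ln\<^sup>2"
    proof -
      have h: "real N \<ge> 1" using N1 by simp
      have "1 \<le> real N * real N" using mult_mono[OF h h] by simp
      then have "(- (real N + 1))\<^sup>2 \<le> 2 * (real N + 1) * real N"
        by (simp add: power2_eq_square algebra_simps)
      then show ?thesis by (rule mult_right_mono) simp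
    qed
    ultimately have cc: "(- (real N + 1))\<^sup>2 * (lap_norm E m)\<^sup>2 \<le> 4 * P * cD N" unfolding Ln_def by simp
    have cDn: "cD N \<ge> 0" unfolding cD_def using u by simp
    show ?thesis unfolding e3 p_def b_def by (rule young_Lop[OF Pnn cDn cc])
  qed
  define \<Phi> where "\<Phi> n = cB n * a n + P * b n + (real n + 1) * p n + cD n * d n" for n
  have pot: "n \<le> N \<Longrightarrow> (\<Sum>k\<in>{1..n}. (real k + 1) * Fk k)
      \<le> \<Phi> 0 - \<Phi> n + (\<Sum>k\<in>{1..n}. (real k + 1) * (D / (real N * real k)))" for n
  proof (induction n)
    case 0 then show ?case by simp
  next
    case (Suc n)
    then have IH: "(\<Sum>k\<in>{1..n}. (real k + 1) * Fk k)
      \<le> \<Phi> 0 - \<Phi> n + (\<Sum>k\<in>{1..n}. (real k + 1) * (D / (real N * real k)))" by simp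
    have nN: "n < N" using Suc.prems by simp
    show ?case using IH I1[OF nN] I2[OF nN] unfolding \<Phi>_def by (simp add: sum.cl_ivl_Suc)
  qed
  have "(\<Sum>k\<in>{1..N}. (real k + 1) * Fk k)
      \<le> \<Phi> 0 - \<Phi> N + (\<Sum>k\<in>{1..N}. (real k + 1) * (D / (real N * real k)))" by (rule pot) simp
  moreover have "\<Phi> N \<ge> 0"
  proof -
    have "cB N * a N \<ge> 0" unfolding cB_def a_def using u sqdnn by simp
    moreover have "- (real N + 1) * p N = - ((real N + 1) * p N)" by (simp add: algebra_simps)
    ultimately show ?thesis unfolding \<Phi>_def using I3 by linarith
  qed
  moreover have "\<Phi> 0 \<le> D / 2 + 2 * D"
  proof -
    have p0: "p 0 = 0" unfolding p_def ipm_def by (simp add: Lop_zero)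
    have "cB 0 * a 0 \<le> D / 2" unfolding cB_def a_def x0 using Da by simp
    moreover have "P * b 0 \<le> 2 * D" unfolding P_def b_def y0 Ln_def using Db u
      by (simp add: field_simps)
    ultimately show ?thesis unfolding \<Phi>_def p0 cD_def by simp
  qed
  moreover have "(\<Sum>k\<in>{1..N}. (real k + 1) * (D / (real N * real k))) \<le> 2 * D"
  proof -
    have "(\<Sum>k\<in>{1..N}. (real k + 1) * (D / (real N * real k))) \<le> (\<Sum>k\<in>{1..N}. 2 * D / real N)"
    proof (rule sum_mono)
      fix k assume k: "k \<in> {1..N}"
      have "(real k + 1) * (D / (real N * real k)) = ((real k + 1) / real k) * (D / real N)"
        by (simp add: field_simps)
      also have "\<dots> \<le> 2 * (D / real N)"
        using k Dnn by (intro mult_right_mono) (auto simp: field_simps)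
      finally show "(real k + 1) * (D / (real N * real k)) \<le> 2 * D / real N" by simp
    qed
    also have "\<dots> = 2 * D" using N1 by simp
    finally show ?thesis .
  qed
  ultimately show ?thesis unfolding Fk_def by simp
qed

lemma theta_sum: "(\<Sum>k\<in>{1..n}. real k + 1) = real n * (real n + 3) / 2"
  by (induction n) (auto simp: sum.cl_ivl_Suc field_simps)

lemma out_bound:
  fixes x :: "nat \<Rightarrow> nat \<Rightarrow> 'v::real_inner"
  assumes conv: "\<forall>i\<in>{1..m}. \<forall>p q. 0 \<le> f i q - f i p - inner (gf i p) (q - p)"
    and N1: "N \<ge> 1" and D: "D \<ge> 0"
    and sb: "(\<Sum>k\<in>{1..N}. (real k + 1) * (Fsum m f (x k) - Fsum m f xs)) \<le> 9 / 2 * D"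
  shows "Fsum m f (dcgs_out N par_theta x) - Fsum m f xs \<le> 9 * D / (real N)\<^sup>2"
proof -
  define \<Theta> where "\<Theta> = (\<Sum>k\<in>{1..N}. par_theta k)"
  have Th: "\<Theta> = real N * (real N + 3) / 2" unfolding \<Theta>_def par_theta_def by (rule theta_sum)
  have Thpos: "\<Theta> > 0" unfolding Th using N1 by simp
  define xb where "xb = dcgs_out N par_theta x"
  have xb: "(\<Sum>k\<in>{1..N}. par_theta k *\<^sub>R x k i) = \<Theta> *\<^sub>R xb i" for i
    unfolding xb_def dcgs_out_def \<Theta>_def[symmetric] using Thpos by simp
  have agent: "\<Theta> * f i (xb i) \<le> (\<Sum>k\<in>{1..N}. par_theta k * f i (x k i))" if i: "i \<in> {1..m}" for i
  proof -
    have "(\<Sum>k\<in>{1..N}. par_theta k * (f i (xb i) + inner (gf i (xb i)) (x k i - xb i)))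
        \<le> (\<Sum>k\<in>{1..N}. par_theta k * f i (x k i))"
    proof (rule sum_mono)
      fix k assume "k \<in> {1..N}"
      have "0 \<le> f i (x k i) - f i (xb i) - inner (gf i (xb i)) (x k i - xb i)" using conv i by blast
      then have "f i (xb i) + inner (gf i (xb i)) (x k i - xb i) \<le> f i (x k i)" by linarith
      then show "par_theta k * (f i (xb i) + inner (gf i (xb i)) (x k i - xb i)) \<le> par_theta k * f i (x k i)"
        by (rule mult_left_mono) (simp add: par_theta_def)
    qed
    moreover have "(\<Sum>k\<in>{1..N}. par_theta k * (f i (xb i) + inner (gf i (xb i)) (x k i - xb i)))
        = \<Theta> * f i (xb i) + inner (gf i (xb i)) ((\<Sum>k\<in>{1..N}. par_theta k *\<^sub>R x k i) - \<Theta> *\<^sub>R xb i)"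
      unfolding \<Theta>_def
      by (simp add: distrib_left sum.distrib sum_distrib_right inner_diff_right inner_sum_right
          sum_subtractf inner_diff_left scaleR_sum_left[symmetric] right_diff_distrib)
    ultimately show ?thesis unfolding xb by simp
  qed
  have "\<Theta> * Fsum m f xb \<le> (\<Sum>k\<in>{1..N}. par_theta k * Fsum m f (x k))"
  proof -
    have "\<Theta> * Fsum m f xb = (\<Sum>i\<in>{1..m}. \<Theta> * f i (xb i))" unfolding Fsum_def by (simp add: sum_distrib_left)
    also have "\<dots> \<le> (\<Sum>i\<in>{1..m}. \<Sum>k\<in>{1..N}. par_theta k * f i (x k i))" by (rule sum_mono) (rule agent)
    also have "\<dots> = (\<Sum>k\<in>{1..N}. \<Sum>i\<in>{1..m}. par_theta k * f i (x k i))" by (rule sum.swap)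
    also have "\<dots> = (\<Sum>k\<in>{1..N}. par_theta k * Fsum m f (x k))" unfolding Fsum_def by (simp add: sum_distrib_left)
    finally show ?thesis .
  qed
  moreover have "(\<Sum>k\<in>{1..N}. par_theta k * Fsum m f (x k)) - \<Theta> * Fsum m f xs
      = (\<Sum>k\<in>{1..N}. (real k + 1) * (Fsum m f (x k) - Fsum m f xs))"
    unfolding \<Theta>_def par_theta_def by (simp add: sum_subtractf sum_distrib_right right_diff_distrib)
  ultimately have G: "\<Theta> * (Fsum m f xb - Fsum m f xs) \<le> 9 / 2 * D" using sb by (simp add: right_diff_distrib)
  show ?thesis
  proof (cases "Fsum m f xb - Fsum m f xs \<le> 0")
    case True
    have nn: "0 \<le> 9 * D / (real N)\<^sup>2" using D by simp
    show ?thesis using True nn unfolding xb_def by linarith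
  next
    case False
    have "(real N)\<^sup>2 / 2 \<le> \<Theta>" unfolding Th by (simp add: power2_eq_square field_simps)
    then have "(real N)\<^sup>2 / 2 * (Fsum m f xb - Fsum m f xs) \<le> \<Theta> * (Fsum m f xb - Fsum m f xs)"
      using False by (intro mult_right_mono) auto
    then have "(real N)\<^sup>2 * (Fsum m f xb - Fsum m f xs) \<le> 9 * D" using G by simp
    then show ?thesis using N1 unfolding xb_def by (simp add: field_simps)
  qed
qed

lemma term_bound:
  assumes u: "0 < u" "u \<le> l" and dd: "dd \<ge> 0" and D: "D > 0" and m: "m \<ge> 1"
    and k: "1 \<le> k" "k \<le> N"
    and T: "real (T + 1) \<le> 2 + 16 * ((l + par_eta u k) * dd) / par_e D m N k i"
  shows "real (T + 1) \<le> 2 + 24 * (real N)^3 * l * dd * real m / D"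
proof -
  have l0: "l \<ge> 0" using u by simp
  have rk: "real k \<ge> 1" "real k \<le> real N" using k by auto
  have "16 * ((l + par_eta u k) * dd) / par_e D m N k i
      = 16 * ((l + real k * u / 2) * real k) * (dd * real m * real N / D)"
    unfolding par_eta_def par_e_def using D m k by (simp add: field_simps)
  also have "\<dots> \<le> 16 * (3 / 2 * l * (real N)\<^sup>2) * (dd * real m * real N / D)"
  proof -
    have a: "l + real k * u / 2 \<le> 3 / 2 * l * real N"
    proof -
      have "real k * u \<le> real N * l" using rk u by (intro mult_mono) auto
      then have "real k * u \<le> l * real N" by (simp add: mult.commute)
      moreover have "l \<le> l * real N" using rk l0 by (simp add: mult_le_cancel_left1)
      ultimately show ?thesis by simp
    qed
    have "(l + real k * u / 2) * real k \<le> (3 / 2 * l * real N) * real N"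
      using a rk l0 u by (intro mult_mono) auto
    then have "(l + real k * u / 2) * real k \<le> 3 / 2 * l * (real N)\<^sup>2" by (simp add: power2_eq_square)
    then have h: "16 * ((l + real k * u / 2) * real k) \<le> 16 * (3 / 2 * l * (real N)\<^sup>2)" by linarith
    have "dd * real m * real N / D \<ge> 0" using dd D by simp
    then show ?thesis by (rule mult_right_mono[OF h])
  qed
  also have "\<dots> = 24 * (real N)^3 * l * dd * real m / D" by (simp add: power2_eq_square power3_eq_cube field_simps)
  finally show ?thesis using T by simp
qed

lemma final_arith:
  fixes N :: nat
  assumes e: "\<epsilon> > 0" and D: "D > 0" and em: "\<epsilon> \<le> M" and M: "M = real m * l" and dd: "dd \<ge> 0"
    and N1: "N \<ge> 1" and NN: "real N \<le> 4 * sqrt (D / \<epsilon>)"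
  shows "real N * (2 + 24 * (real N)^3 * l * dd * real m / D) \<le> (32 + 6144 * dd) * (real m * l * D / \<epsilon>\<^sup>2)"
proof -
  have Mp: "M > 0" using e em by simp
  have N2: "(real N)\<^sup>2 \<le> 16 * (D / \<epsilon>)"
  proof -
    have "(real N)\<^sup>2 \<le> (4 * sqrt (D / \<epsilon>))\<^sup>2" using NN by (intro power_mono) auto
    also have "\<dots> = 16 * (D / \<epsilon>)" using D e by (simp add: power_mult_distrib)
    finally show ?thesis .
  qed
  have DM: "D / \<epsilon> \<le> M * D / \<epsilon>\<^sup>2"
  proof -
    have "D * \<epsilon> \<le> M * D" using em D by (simp add: mult.commute mult_right_mono)
    then show ?thesis using e by (simp add: field_simps power2_eq_square)
  qed
  have t1: "real N * 2 \<le> 32 * (M * D / \<epsilon>\<^sup>2)"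
  proof -
    have "real N \<le> (real N)\<^sup>2" using N1 by (simp add: power2_eq_square)
    then show ?thesis using N2 DM by linarith
  qed
  have N4: "(real N)^4 \<le> 256 * (D / \<epsilon>)\<^sup>2"
  proof -
    have "(real N)^4 = ((real N)\<^sup>2)\<^sup>2" by simp
    also have "\<dots> \<le> (16 * (D / \<epsilon>))\<^sup>2" using N2 by (intro power_mono) auto
    also have "(16 * (D / \<epsilon>))\<^sup>2 = 256 * (D / \<epsilon>)\<^sup>2" by (simp only: power_mult_distrib) simp
    finally show ?thesis .
  qed
  have t2: "real N * (24 * (real N)^3 * l * dd * real m / D) \<le> 6144 * dd * (M * D / \<epsilon>\<^sup>2)"
  proof -
    have "real N * (24 * (real N)^3 * l * dd * real m / D) = (real N)^4 * (24 * M * dd / D)"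
      unfolding M by (simp add: power_def field_simps)
    also have "\<dots> \<le> 256 * (D / \<epsilon>)\<^sup>2 * (24 * M * dd / D)"
      using N4 Mp dd D by (intro mult_right_mono) auto
    also have "\<dots> = 6144 * dd * (M * D / \<epsilon>\<^sup>2)" using D e by (simp add: power2_eq_square field_simps)
    finally show ?thesis .
  qed
  have e1: "(32 + 6144 * dd) * (M * D / \<epsilon>\<^sup>2) = 32 * (M * D / \<epsilon>\<^sup>2) + 6144 * dd * (M * D / \<epsilon>\<^sup>2)"
    by (rule distrib_right)
  have e2: "real N * (2 + 24 * (real N)^3 * l * dd * real m / D) = real N * 2 + real N * (24 * (real N)^3 * l * dd * real m / D)"
    by (simp add: distrib_left)
  have "real N * (2 + 24 * (real N)^3 * l * dd * real m / D) \<le> (32 + 6144 * dd) * (M * D / \<epsilon>\<^sup>2)"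
    unfolding e1 e2 using t1 t2 by linarith
  then show ?thesis unfolding M by (simp add: mult.assoc)
qed

lemma lo_bound:
  fixes X :: "'v::euclidean_space set" and f :: "'v \<Rightarrow> real"
  assumes cX: "compact X" and vX: "convex X"
    and deriv: "\<forall>z. (f has_derivative (\<lambda>h. inner (gf z) h)) (at z)"
    and sc: "\<forall>p q. u / 2 * (norm (q - p))\<^sup>2 \<le> f q - f p - inner (gf p) (q - p)
                        \<and> f q - f p - inner (gf p) (q - p) \<le> l / 2 * (norm (q - p))\<^sup>2"
    and u: "0 < u" "u \<le> l"
    and dd: "\<forall>a\<in>X. \<forall>b\<in>X. (norm (a - b))\<^sup>2 \<le> dd" "dd \<ge> 0"
    and D: "D > 0" and m: "m \<ge> 1" and k: "1 \<le> k" "k \<le> N"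
    and run: "cg_partial X f gf xx w (par_eta u k) (par_e D m N k i) z s t"
  shows "real (t + 1) \<le> 2 + 24 * (real N)^3 * l * dd * real m / D"
proof -
  have lower: "\<forall>p q. 0 \<le> f q - f p - inner (gf p) (q - p)"
  proof (intro allI)
    fix p q :: 'v
    have "0 \<le> u / 2 * (norm (q - p))\<^sup>2" using u by simp
    then show "0 \<le> f q - f p - inner (gf p) (q - p)" using sc by (meson order_trans)
  qed
  have upper: "\<forall>p q. f q - f p - inner (gf p) (q - p) \<le> l / 2 * (norm (q - p))\<^sup>2" using sc by blast
  have eta: "par_eta u k \<ge> 0" unfolding par_eta_def using u by simp
  have epos: "par_e D m N k i > 0" unfolding par_e_def using D m k by simp
  have "real (t + 1) \<le> 2 + 16 * ((l + par_eta u k) * dd) / par_e D m N k i"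
    by (rule fw_count[OF cX vX deriv lower upper eta _ epos dd(1) run]) (use u in simp)
  then show ?thesis by (rule term_bound[OF u dd(2) D m k])
qed

theorem corollary2:
  fixes X :: "'v::euclidean_space set"
  assumes "compact X" and "convex X" and "X \<noteq> {}"
  shows "\<exists>C1 C2 :: real.
    \<forall>(m::nat) (E::nat \<Rightarrow> nat \<Rightarrow> bool) (f::nat \<Rightarrow> 'v \<Rightarrow> real) (gf::nat \<Rightarrow> 'v \<Rightarrow> 'v)
      (u::real) (l::real) (x0::nat \<Rightarrow> 'v) (y0::nat \<Rightarrow> 'v) (xs::nat \<Rightarrow> 'v).
      graph_ok E m
      \<and> u > 0
      \<and> (\<forall>i\<in>{1..m}. \<forall>z. (f i has_derivative (\<lambda>h. inner (gf i z) h)) (at z))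
      \<and> (\<forall>i\<in>{1..m}. \<forall>p q. u / 2 * (norm (q - p))\<^sup>2 \<le> f i q - f i p - inner (gf i p) (q - p)
                        \<and> f i q - f i p - inner (gf i p) (q - p) \<le> l / 2 * (norm (q - p))\<^sup>2)
      \<and> (\<forall>i\<in>{1..m}. x0 i \<in> X)
      \<and> (\<forall>i\<in>{1..m}. xs i \<in> X) \<and> consensus E m xs
      \<and> (\<forall>z. (\<forall>i\<in>{1..m}. z i \<in> X) \<and> consensus E m z \<longrightarrow> Fsum m f xs \<le> Fsum m f z)
      \<and> Dconst u (lap_norm E m) m x0 xs y0 > 0
      \<longrightarrow>
      (let D = Dconst u (lap_norm E m) m x0 xs y0; Lnm = lap_norm E m in
       \<exists>\<epsilon>0>0. \<forall>\<epsilon>. 0 < \<epsilon> \<and> \<epsilon> \<le> \<epsilon>0 \<longrightarrow>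
        (\<exists>N::nat. N \<ge> 1
          \<and> real (2 * N) \<le> C1 * sqrt (D / \<epsilon>)
          \<and> (\<forall>i\<in>{1..m}. \<forall>k\<in>{1..N}. \<forall>x y Z S T.
               dcgs_exec X E m f gf par_alpha (par_tau u Lnm) (par_eta u) (par_e D m N)
                 x0 y0 (k - 1) x y Z S T
               \<longrightarrow> (\<forall>z s t. cg_partial X (f i) (gf i) (x (k - 1) i)
                      (dcgs_w E m (dcgs_y E m par_alpha (par_tau u Lnm) x y k) i)
                      (par_eta u k) (par_e D m N k i) z s t
                    \<longrightarrow> (\<Sum>k'\<in>{1..k - 1}. real (T k' i + 1)) + real (t + 1)
                         \<le> C2 * (real m * l * D / \<epsilon>\<^sup>2)))
          \<and> (\<forall>x y Z S T.
               dcgs_exec X E m f gf par_alpha (par_tau u Lnm) (par_eta u) (par_e D m N)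
                 x0 y0 N x y Z S T
               \<longrightarrow> Fsum m f (dcgs_out N par_theta x) - Fsum m f xs \<le> \<epsilon>)))"
proof -
  obtain R where R: "\<forall>a\<in>X. norm a \<le> R"
    using compact_imp_bounded[OF assms(1)] unfolding bounded_iff by blast
  have R0: "R \<ge> 0" using R assms(3) by (meson ex_in_conv norm_ge_zero order_trans)
  define dd where "dd = (2 * R)\<^sup>2"
  have dd0: "dd \<ge> 0" unfolding dd_def by simp
  have ddX: "\<forall>a\<in>X. \<forall>b\<in>X. (norm (a - b))\<^sup>2 \<le> dd"
  proof (intro ballI)
    fix a b assume a: "a \<in> X" and b: "b \<in> X"
    have "norm (a - b) \<le> norm a + norm b" by (rule norm_triangle_ineq4)
    also have "\<dots> \<le> 2 * R"
    proof -
      have "norm a \<le> R" "norm b \<le> R" using R a b by auto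
      then show ?thesis by linarith
    qed
    finally show "(norm (a - b))\<^sup>2 \<le> dd" unfolding dd_def by (intro power_mono) auto
  qed
  show ?thesis
    apply (rule exI[of _ 8], rule exI[of _ "32 + 6144 * dd"], intro allI impI)
    apply (unfold Let_def)
    subgoal premises H for m E f gf u l x0 y0 xs
    proof -
    have g: "graph_ok E m" and u: "u > 0"
      and deriv: "\<forall>i\<in>{1..m}. \<forall>z. (f i has_derivative (\<lambda>h. inner (gf i z) h)) (at z)"
      and sc: "\<forall>i\<in>{1..m}. \<forall>p q. u / 2 * (norm (q - p))\<^sup>2 \<le> f i q - f i p - inner (gf i p) (q - p)
                        \<and> f i q - f i p - inner (gf i p) (q - p) \<le> l / 2 * (norm (q - p))\<^sup>2"
      and xsX: "\<forall>i\<in>{1..m}. xs i \<in> X" and cons: "consensus E m xs"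
      and Dpos: "Dconst u (lap_norm E m) m x0 xs y0 > 0"
      using H by auto
    have m1: "m \<ge> 1" and sym: "\<forall>i j. E i j \<longrightarrow> E j i" using g unfolding graph_ok_def by auto
    define D where "D = Dconst u (lap_norm E m) m x0 xs y0"
    have D0: "D > 0" using Dpos unfolding D_def .
    have Da: "u * sqdist m x0 xs \<le> D" and Db: "(lap_norm E m)\<^sup>2 * sqnorm m y0 / u \<le> D"
      unfolding D_def Dconst_def by auto
    have ul: "u \<le> l"
    proof -
      obtain v :: 'v where v: "v \<in> Basis" using nonempty_Basis by blast
      have nv: "norm (v - 0) = 1" using v by simp
      have "u / 2 * (norm (v - 0))\<^sup>2 \<le> l / 2 * (norm (v - 0))\<^sup>2"
        using sc m1 by (meson atLeastAtMost_iff le_refl order_trans)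
      then show ?thesis unfolding nv by simp
    qed
    have l0: "l > 0" using u ul by simp
    have sc1: "\<forall>i\<in>{1..m}. \<forall>p q. u / 2 * (norm (q - p))\<^sup>2 \<le> f i q - f i p - inner (gf i p) (q - p)"
      using sc by blast
    have conv: "\<forall>i\<in>{1..m}. \<forall>p q. 0 \<le> f i q - f i p - inner (gf i p) (q - p)"
    proof (intro ballI allI)
      fix i and p q :: 'v assume i: "i \<in> {1..m}"
      have "0 \<le> u / 2 * (norm (q - p))\<^sup>2" using u by simp
      then show "0 \<le> f i q - f i p - inner (gf i p) (q - p)" using sc1 i by (meson order_trans)
    qed
    define \<epsilon>0 where "\<epsilon>0 = min D (real m * l)"
    have e0: "\<epsilon>0 > 0" unfolding \<epsilon>0_def using D0 m1 l0 by simp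
    show ?thesis
      unfolding D_def[symmetric]
      apply (rule exI[of _ \<epsilon>0], rule conjI[OF e0], intro allI impI)
      subgoal premises ee for \<epsilon>
      proof -
      have e: "\<epsilon> > 0" and eD: "\<epsilon> \<le> D" and em: "\<epsilon> \<le> real m * l" using ee unfolding \<epsilon>0_def by auto
      define sq where "sq = sqrt (D / \<epsilon>)"
      have sq1: "sq \<ge> 1" unfolding sq_def using e eD by simp
      have sq2: "sq\<^sup>2 = D / \<epsilon>" unfolding sq_def using e D0 by simp
      define N where "N = nat \<lceil>3 * sq\<rceil>"
      have rN: "real N = of_int \<lceil>3 * sq\<rceil>" unfolding N_def using sq1 by simp
      have N3: "3 * sq \<le> real N" unfolding rN by simp
      have N4: "real N \<le> 3 * sq + 1" unfolding rN by simp
      have N1: "N \<ge> 1" using N3 sq1 by simp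
      have N8: "real (2 * N) \<le> 8 * sq" using N4 sq1 by simp
      show ?thesis
        apply (rule exI[of _ N])
        apply (intro conjI N1)
        subgoal using N8 unfolding sq_def .
        subgoal
        proof (intro ballI allI impI)
        fix i k x y Z S T z s t
        assume i: "i \<in> {1..m}" and k: "k \<in> {1..N}"
          and ex: "dcgs_exec X E m f gf par_alpha (par_tau u (lap_norm E m)) (par_eta u) (par_e D m N)
                 x0 y0 (k - 1) x y Z S T"
          and run: "cg_partial X (f i) (gf i) (x (k - 1) i)
                      (dcgs_w E m (dcgs_y E m par_alpha (par_tau u (lap_norm E m)) x y k) i)
                      (par_eta u k) (par_e D m N k i) z s t"
        define B where "B = 2 + 24 * (real N)^3 * l * dd * real m / D"
        have B0: "B \<ge> 0" unfolding B_def using l0 dd0 D0 by simp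
        have di: "\<forall>z. (f i has_derivative (\<lambda>h. inner (gf i z) h)) (at z)" using deriv i by blast
        have sci: "\<forall>p q. u / 2 * (norm (q - p))\<^sup>2 \<le> f i q - f i p - inner (gf i p) (q - p)
                        \<and> f i q - f i p - inner (gf i p) (q - p) \<le> l / 2 * (norm (q - p))\<^sup>2"
          using sc i by blast
        have k1: "1 \<le> k" "k \<le> N" using k by auto
        have cur: "real (t + 1) \<le> B" unfolding B_def
          by (rule lo_bound[OF assms(1,2) di sci u ul ddX dd0 D0 m1 k1 run])
        have prev: "real (T k' i + 1) \<le> B" if k': "k' \<in> {1..k - 1}" for k'
        proof -
          have "cg_complete X (f i) (gf i) (x (k' - 1) i) (dcgs_w E m (y k') i) (par_eta u k') (par_e D m N k' i)
                    (Z k' i) (S k' i) (T k' i)"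
            using ex k' i unfolding dcgs_exec_def by blast
          then have r: "cg_partial X (f i) (gf i) (x (k' - 1) i) (dcgs_w E m (y k') i) (par_eta u k') (par_e D m N k' i)
                    (Z k' i) (S k' i) (T k' i)" unfolding cg_complete_def by blast
          have "1 \<le> k'" "k' \<le> N" using k' k by auto
          then show ?thesis unfolding B_def
            by (rule lo_bound[OF assms(1,2) di sci u ul ddX dd0 D0 m1 _ _ r])
        qed
        have "(\<Sum>k'\<in>{1..k - 1}. real (T k' i + 1)) \<le> real (card {1..k - 1}) * B"
          by (rule sum_bounded_above) (rule prev)
        then have "(\<Sum>k'\<in>{1..k - 1}. real (T k' i + 1)) + real (t + 1) \<le> real (k - 1) * B + B"
          using cur by simp
        also have "\<dots> = real k * B" using k1 by (simp add: of_nat_diff algebra_simps)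
        also have "\<dots> \<le> real N * B" using k1 B0 by (intro mult_right_mono) auto
        also have "\<dots> \<le> (32 + 6144 * dd) * (real m * l * D / \<epsilon>\<^sup>2)" unfolding B_def
          by (rule final_arith[OF e D0 em refl dd0 N1]) (use N4 sq1 in \<open>simp add: sq_def[symmetric]\<close>)
        finally show "(\<Sum>k'\<in>{1..k - 1}. real (T k' i + 1)) + real (t + 1)
                         \<le> (32 + 6144 * dd) * (real m * l * D / \<epsilon>\<^sup>2)" .
        qed
        subgoal
        proof (intro allI impI)
        fix x y Z S T
        assume ex: "dcgs_exec X E m f gf par_alpha (par_tau u (lap_norm E m)) (par_eta u) (par_e D m N)
                 x0 y0 N x y Z S T"
        have sb: "(\<Sum>k\<in>{1..N}. (real k + 1) * (Fsum m f (x k) - Fsum m f xs)) \<le> 9 / 2 * D"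
          by (rule dcgs_conv[OF sym m1 u sc1 xsX cons N1 Da Db ex])
        have "Fsum m f (dcgs_out N par_theta x) - Fsum m f xs \<le> 9 * D / (real N)\<^sup>2"
          by (rule out_bound[OF conv N1 _ sb]) (use D0 in simp)
        also have "\<dots> \<le> \<epsilon>"
        proof -
          have "(3 * sq)\<^sup>2 \<le> (real N)\<^sup>2" using N3 sq1 by (intro power_mono) auto
          then have "9 * (D / \<epsilon>) \<le> (real N)\<^sup>2" using sq2 by (simp add: power_mult_distrib)
          then have "9 * D \<le> \<epsilon> * (real N)\<^sup>2" using e by (simp add: field_simps)
          then show ?thesis using N1 by (simp add: field_simps)
        qed
        finally show "Fsum m f (dcgs_out N par_theta x) - Fsum m f xs \<le> \<epsilon>" .
        qed
        done
      qed
      done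
    qed
    done
qed

end
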